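(* Let $n\ge1$, let $r>0$, and let $\zeta$ be an unordered $n$-tuple of integers $\{\zeta^1,\ldots,\zeta^n\}$ with $\sum_i(\zeta^i)^2=r^2$, having exactly $k\ge1$ non-zero entries. Let $N_\zeta$ be the set of all distinct vectors of the form $(\pm\zeta^{\pi(1)},\ldots,\pm\zeta^{\pi(n)})$, $\pi\in S_n$. For every $\xi\in N_\zeta$ and every $\bar s\in\{1,\ldots,k\}$ let $B(\xi,\bar s)=[\xi_1,\ldots,\xi_n]\in\mathbb{Z}^{n\times n}$ be the matrix whose columns are the vectors $\xi_1,\ldots,\xi_n$ constructed from $\xi$ and $\bar s$ by the following rule (with $i_1<\cdots<i_k$ the indices of the non-zero coordinates of $\xi$ and $j_1<\cdots<j_{n-k}$ those of its zero coordinates): $\xi_1=\xi$; for $p=2,\ldots,k-\bar s+1$, $\xi_p$ is $\xi$ with the sign of coordinate $i_{\bar s-1+p}$ changed; for $p=k-\bar s+2,\ldots,k$, $\xi_p$ is $\xi$ with the sign of coordinate $i_{\bar s-1+p-k}$ changed; for $p=k+1,\ldots,n$, $\xi_p$ is $\xi$ with coordinate $i_{\bar s}$ replaced by $0$ and coordinate $j_{p-k}$ replaced by $\xi^{i_{\bar s}}$. Let $K_\zeta$ denote the family of all matrices $B(\xi,\bar s)$, $\xi\in N_\zeta$, $\bar s\in\{1,\ldots,k\}$ (indexed by the pairs $(\xi,\bar s)$, so that $|K_\zeta|=k|N_\zeta|$). Then every vector $\xi\in N_\zeta$ occurs as a column of exactly $nk$ members of the family $K_\zeta$.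
   Context: Each matrix $B(\xi,\bar s)$ is viewed as generating the lattice $B\mathbb{Z}^n$; "occurs as a column of exactly $nk$ members" counts members of the indexed family $K_\zeta$. *)

theory Defs
  imports Complex_Main "HOL-Combinatorics.Permutations"
begin

text \<open>Vectors in Z^n are represented as int lists of length n (0-based positions).\<close>

definition signed_perms :: "int list \<Rightarrow> int list set" where
  "signed_perms \<zeta> = {\<xi>. \<exists>\<pi> sg. \<pi> permutes {..<length \<zeta>} \<and> (\<forall>i. sg i = 1 \<or> sg i = -1) \<and>
       \<xi> = map (\<lambda>i. sg i * \<zeta> ! (\<pi> i)) [0..<length \<zeta>]}"

text \<open>Positions of the non-zero / zero coordinates, in increasing order
  (the paper's i_1<...<i_k is nz_idx xi ! 0, ..., nz_idx xi ! (k-1)).\<close>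
definition nz_idx :: "int list \<Rightarrow> nat list" where
  "nz_idx \<xi> = filter (\<lambda>i. \<xi> ! i \<noteq> 0) [0..<length \<xi>]"

definition z_idx :: "int list \<Rightarrow> nat list" where
  "z_idx \<xi> = filter (\<lambda>i. \<xi> ! i = 0) [0..<length \<xi>]"

definition flip_sign :: "int list \<Rightarrow> nat \<Rightarrow> int list" where
  "flip_sign \<xi> i = \<xi>[i := - (\<xi> ! i)]"

text \<open>Column p (1-based, 1 \<le> p \<le> n) of B(xi, s) (s 1-based, 1 \<le> s \<le> k), with k the
  number of non-zero entries of xi; i_m = nz_idx xi ! (m-1), j_m = z_idx xi ! (m-1).\<close>
definition Bcol :: "int list \<Rightarrow> nat \<Rightarrow> nat \<Rightarrow> int list" where
  "Bcol \<xi> s p =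
     (let k = length (nz_idx \<xi>); ii = (\<lambda>m. nz_idx \<xi> ! (m - 1)); jj = (\<lambda>m. z_idx \<xi> ! (m - 1)) in
      if p = 1 then \<xi>
      else if 2 \<le> p \<and> p \<le> k - s + 1 then flip_sign \<xi> (ii (s - 1 + p))
      else if k - s + 2 \<le> p \<and> p \<le> k then flip_sign \<xi> (ii (s - 1 + p - k))
      else \<xi>[ii s := 0, jj (p - k) := \<xi> ! (ii s)])"

end

theory Submission imports Defs begin

lemma sp_len: "\<eta> \<in> signed_perms \<zeta> \<Longrightarrow> length \<eta> = length \<zeta>"
  unfolding signed_perms_def by auto

lemma sp_perm:
  assumes "\<eta> \<in> signed_perms \<zeta>" "\<tau> permutes {..<length \<eta>}"
  shows "map (\<lambda>t. \<eta> ! (\<tau> t)) [0..<length \<eta>] \<in> signed_perms \<zeta>"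
proof -
  obtain \<pi> sg where p: "\<pi> permutes {..<length \<zeta>}" "\<forall>i. sg i = 1 \<or> sg i = -1"
    "\<eta> = map (\<lambda>i. sg i * \<zeta> ! (\<pi> i)) [0..<length \<zeta>]"
    using assms(1) unfolding signed_perms_def by auto
  have l: "length \<eta> = length \<zeta>" using p(3) by simp
  have t: "\<tau> permutes {..<length \<zeta>}" using assms(2) l by simp
  have "\<pi> \<circ> \<tau> permutes {..<length \<zeta>}" using permutes_compose[OF t p(1)] .
  moreover have "\<forall>i. (sg \<circ> \<tau>) i = 1 \<or> (sg \<circ> \<tau>) i = -1" using p(2) by auto
  moreover have "map (\<lambda>t. \<eta> ! (\<tau> t)) [0..<length \<eta>] = map (\<lambda>i. (sg \<circ> \<tau>) i * \<zeta> ! ((\<pi> \<circ> \<tau>) i)) [0..<length \<zeta>]"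
    using p(3) l permutes_in_image[OF t] by (auto intro!: nth_equalityI)
  ultimately show ?thesis unfolding signed_perms_def by blast
qed

lemma sp_flip:
  assumes "\<eta> \<in> signed_perms \<zeta>"
  shows "flip_sign \<eta> t \<in> signed_perms \<zeta>"
proof -
  obtain \<pi> sg where p: "\<pi> permutes {..<length \<zeta>}" "\<forall>i. sg i = 1 \<or> sg i = -1"
    "\<eta> = map (\<lambda>i. sg i * \<zeta> ! (\<pi> i)) [0..<length \<zeta>]"
    using assms(1) unfolding signed_perms_def by auto
  have "\<forall>i. (sg(t := - sg t)) i = 1 \<or> (sg(t := - sg t)) i = -1" using p(2) by (metis fun_upd_apply minus_minus)
  moreover have "flip_sign \<eta> t = map (\<lambda>i. (sg(t := - sg t)) i * \<zeta> ! (\<pi> i)) [0..<length \<zeta>]"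
    using p(3) unfolding flip_sign_def by (auto intro!: nth_equalityI simp: nth_list_update)
  ultimately show ?thesis using p(1) unfolding signed_perms_def by blast
qed

lemma sp_card:
  assumes "\<eta> \<in> signed_perms \<zeta>"
  shows "card {i. i < length \<zeta> \<and> \<eta> ! i \<noteq> 0} = card {i. i < length \<zeta> \<and> \<zeta> ! i \<noteq> 0}"
proof -
  obtain \<pi> sg where p: "\<pi> permutes {..<length \<zeta>}" "\<forall>i. sg i = 1 \<or> sg i = -1"
    "\<eta> = map (\<lambda>i. sg i * \<zeta> ! (\<pi> i)) [0..<length \<zeta>]"
    using assms(1) unfolding signed_perms_def by auto
  have e: "{i. i < length \<zeta> \<and> \<eta> ! i \<noteq> 0} = {i. i < length \<zeta> \<and> \<zeta> ! (\<pi> i) \<noteq> 0}"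
  proof -
    have a: "\<forall>i<length \<zeta>. \<eta> ! i = sg i * \<zeta> ! (\<pi> i)" using p(3) by simp
    have b: "\<forall>i. sg i \<noteq> 0" using p(2) by (metis zero_neq_neg_one zero_neq_one)
    have c: "(\<eta> ! i \<noteq> 0) = (\<zeta> ! (\<pi> i) \<noteq> 0)" if "i<length \<zeta>" for i
    proof -
      have "\<eta> ! i = sg i * \<zeta> ! (\<pi> i)" using a that by blast
      moreover have "sg i \<noteq> 0" using b by blast
      ultimately show ?thesis by simp
    qed
    show ?thesis
    proof (rule Collect_cong)
      fix i show "(i < length \<zeta> \<and> \<eta> ! i \<noteq> 0) = (i < length \<zeta> \<and> \<zeta> ! (\<pi> i) \<noteq> 0)"
        using c[of i] by blast
    qed
  qed
  have im: "\<pi> ` {i. i < length \<zeta> \<and> \<zeta> ! (\<pi> i) \<noteq> 0} = {i. i < length \<zeta> \<and> \<zeta> ! i \<noteq> 0}"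
  proof (rule set_eqI, rule iffI)
    fix x assume "x \<in> \<pi> ` {i. i < length \<zeta> \<and> \<zeta> ! (\<pi> i) \<noteq> 0}"
    then show "x \<in> {i. i < length \<zeta> \<and> \<zeta> ! i \<noteq> 0}" using permutes_in_image[OF p(1)] by auto
  next
    fix x assume x: "x \<in> {i. i < length \<zeta> \<and> \<zeta> ! i \<noteq> 0}"
    have "inv \<pi> x < length \<zeta>" using x permutes_in_image[OF permutes_inv[OF p(1)]] by auto
    then show "x \<in> \<pi> ` {i. i < length \<zeta> \<and> \<zeta> ! (\<pi> i) \<noteq> 0}"
      using x permutes_inverses[OF p(1)] by (metis (mono_tags, lifting) image_eqI mem_Collect_eq)
  qed
  have "inj \<pi>" using p(1) permutes_inj by blast
  have "card (\<pi> ` {i. i < length \<zeta> \<and> \<zeta> ! (\<pi> i) \<noteq> 0}) = card {i. i < length \<zeta> \<and> \<zeta> ! (\<pi> i) \<noteq> 0}"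
    by (rule card_image[OF inj_on_subset[OF \<open>inj \<pi>\<close> subset_UNIV]])
  then show ?thesis unfolding e im by simp
qed

lemma set_nz: "set (nz_idx \<eta>) = {i. i < length \<eta> \<and> \<eta> ! i \<noteq> 0}"
  unfolding nz_idx_def by auto
lemma dist_nz: "distinct (nz_idx \<eta>)" unfolding nz_idx_def by auto
lemma len_nz: "length (nz_idx \<eta>) = card {i. i < length \<eta> \<and> \<eta> ! i \<noteq> 0}"
  using distinct_card[OF dist_nz, of \<eta>] set_nz by metis
lemma set_z: "set (z_idx \<eta>) = {i. i < length \<eta> \<and> \<eta> ! i = 0}"
  unfolding z_idx_def by auto
lemma len_z: "length (z_idx \<eta>) = length \<eta> - length (nz_idx \<eta>)"
  unfolding z_idx_def nz_idx_def using sum_length_filter_compl[of "\<lambda>i. \<eta> ! i \<noteq> 0" "[0..<length \<eta>]"] by simp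
lemma flip_zero: "(flip_sign \<eta> t ! x = 0) = (\<eta> ! x = 0)"
  unfolding flip_sign_def by (cases "x = t"; cases "t < length \<eta>") (auto simp: list_update_beyond)
lemma len_flip[simp]: "length (flip_sign \<eta> t) = length \<eta>"
  unfolding flip_sign_def by simp
lemma nz_flip: "nz_idx (flip_sign \<eta> t) = nz_idx \<eta>"
  unfolding nz_idx_def by (simp add: flip_zero)
lemma flip_flip: "flip_sign (flip_sign \<eta> t) t = \<eta>"
  unfolding flip_sign_def by (cases "t < length \<eta>") (auto simp: list_update_beyond)


lemma dist_z: "distinct (z_idx \<eta>)" unfolding z_idx_def by auto
lemma flip_nth1: "t < length \<eta> \<Longrightarrow> flip_sign \<eta> t ! t = - (\<eta> ! t)"
  unfolding flip_sign_def by simp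
lemma flip_nth2: "t' \<noteq> t \<Longrightarrow> flip_sign \<eta> t ! t' = \<eta> ! t'"
  unfolding flip_sign_def by simp

lemma Bcol_1: "Bcol \<eta> s 1 = \<eta>" unfolding Bcol_def Let_def by simp
lemma Bcol_b1: "length (nz_idx \<eta>) = k \<Longrightarrow> 2 \<le> p \<Longrightarrow> p \<le> k - s + 1 \<Longrightarrow>
   Bcol \<eta> s p = flip_sign \<eta> (nz_idx \<eta> ! (s - 1 + p - 1))"
  unfolding Bcol_def Let_def by simp
lemma Bcol_b2: "length (nz_idx \<eta>) = k \<Longrightarrow> 2 \<le> p \<Longrightarrow> \<not> p \<le> k - s + 1 \<Longrightarrow> k - s + 2 \<le> p \<Longrightarrow> p \<le> k \<Longrightarrow>
   Bcol \<eta> s p = flip_sign \<eta> (nz_idx \<eta> ! (s - 1 + p - k - 1))"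
  unfolding Bcol_def Let_def by simp
lemma Bcol_c:
  assumes "length (nz_idx \<eta>) = k" "1 \<le> s" "s \<le> k" "k < p"
  shows "Bcol \<eta> s p = \<eta>[nz_idx \<eta> ! (s - 1) := 0, z_idx \<eta> ! (p - k - 1) := \<eta> ! (nz_idx \<eta> ! (s - 1))]"
proof -
  have "\<not> p \<le> k - s + 1" "\<not> p \<le> k" "p \<noteq> 1" using assms by arith+
  then show ?thesis unfolding Bcol_def Let_def using assms(1) by simp
qed

theorem lemma3p2:
  fixes \<zeta> \<xi> :: "int list" and n k :: nat and r :: real
  assumes "length \<zeta> = n" and "n \<ge> 1" and "r > 0"
    and "(\<Sum>i<n. real_of_int ((\<zeta> ! i)^2)) = r^2"
    and "k = card {i. i < n \<and> \<zeta> ! i \<noteq> 0}" and "k \<ge> 1"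
    and "\<xi> \<in> signed_perms \<zeta>"
  shows "card {(\<eta>, s). \<eta> \<in> signed_perms \<zeta> \<and> s \<in> {1..k} \<and>
                 (\<exists>p\<in>{1..n}. Bcol \<eta> s p = \<xi>)} = n * k"
proof -
  note xi = assms(7)
  have spl: "length \<eta> = n" if "\<eta> \<in> signed_perms \<zeta>" for \<eta>
    using sp_len[OF that] assms(1) by simp
  have spk: "length (nz_idx \<eta>) = k" if "\<eta> \<in> signed_perms \<zeta>" for \<eta>
    using len_nz[of \<eta>] sp_card[OF that] spl[OF that] assms(1,5) by simp
  have lx: "length \<xi> = n" using spl[OF xi] .
  have lnx: "length (nz_idx \<xi>) = k" using spk[OF xi] .
  define NZ where "NZ = {i. i < n \<and> \<xi> ! i \<noteq> 0}"
  define Z where "Z = {i. i < n \<and> \<xi> ! i = 0}"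
  have cNZ: "card NZ = k" using lnx len_nz[of \<xi>] lx NZ_def by simp
  have kn: "k \<le> n" using len_nz[of \<xi>] lnx lx
    by (metis length_filter_le length_upt minus_nat.diff_0 nz_idx_def)
  have cZ: "card Z = n - k" using len_z[of \<xi>] distinct_card[OF dist_z, of \<xi>] set_z[of \<xi>] lx lnx Z_def by simp
  have nzx: "nz_idx \<xi> ! (m - 1) < n \<and> \<xi> ! (nz_idx \<xi> ! (m - 1)) \<noteq> 0" if "m \<in> {1..k}" for m
  proof -
    have "nz_idx \<xi> ! (m - 1) \<in> set (nz_idx \<xi>)" using that lnx by auto
    then show ?thesis using set_nz[of \<xi>] lx by auto
  qed
  define fl where "fl m = flip_sign \<xi> (nz_idx \<xi> ! (m - 1))" for m
  define sw where "sw j i = \<xi>[j := 0, i := \<xi> ! j]" for j i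
  define A where "A = {\<xi>} \<times> {1..k}"
  define IB where "IB = (SIGMA m:{1..k}. {1..k} - {m})"
  define B where "B = (\<lambda>(m, s). (fl m, s)) ` IB"
  define C where "C = {(\<eta>, s). \<exists>j\<in>NZ. \<exists>i\<in>Z. \<eta> = sw j i \<and> s \<in> {1..k} \<and> nz_idx \<eta> ! (s - 1) = i}"
  define SS where "SS = {(\<eta>, s). \<eta> \<in> signed_perms \<zeta> \<and> s \<in> {1..k} \<and>
                 (\<exists>p\<in>{1..n}. Bcol \<eta> s p = \<xi>)}"
  have swl: "length (sw j i) = n" for j i using lx sw_def by simp
  have swn: "sw j i ! t = (if t = i then \<xi> ! j else if t = j then 0 else \<xi> ! t)" if "t < n" "j \<in> NZ" "i \<in> Z" for j i t
    using that lx unfolding sw_def NZ_def Z_def by (auto simp: nth_list_update)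
  have swsp: "sw j i \<in> signed_perms \<zeta>" if "j \<in> NZ" "i \<in> Z" for j i
  proof -
    have "transpose i j permutes {..<length \<xi>}" using that lx NZ_def Z_def by (auto intro!: permutes_swap_id)
    from sp_perm[OF xi this] have "map (\<lambda>t. \<xi> ! (transpose i j t)) [0..<length \<xi>] \<in> signed_perms \<zeta>" .
    moreover have "map (\<lambda>t. \<xi> ! (transpose i j t)) [0..<length \<xi>] = sw j i"
      using that lx swl by (auto intro!: nth_equalityI simp: swn transpose_def Z_def)
    ultimately show ?thesis by simp
  qed
  have swj: "sw j i ! j = 0" if "j \<in> NZ" "i \<in> Z" for j i
    using swn[OF _ that, of j] that NZ_def Z_def by auto
  have flsp: "fl m \<in> signed_perms \<zeta>" for m using sp_flip[OF xi] fl_def by simp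
  have nzfl: "nz_idx (fl m) = nz_idx \<xi>" for m using nz_flip fl_def by simp
  have inB: "(fl m, s) \<in> B" if "m \<in> {1..k}" "s \<in> {1..k}" "m \<noteq> s" for m s
  proof -
    have "(m, s) \<in> IB" using that unfolding IB_def by auto
    then show ?thesis unfolding B_def by (rule image_eqI[rotated]) simp
  qed
  have sub1: "SS \<subseteq> A \<union> B \<union> C"
  proof
    fix x assume "x \<in> SS"
    then obtain \<eta> s p where x: "x = (\<eta>, s)" "\<eta> \<in> signed_perms \<zeta>" "s \<in> {1..k}" "p \<in> {1..n}" "Bcol \<eta> s p = \<xi>"
      unfolding SS_def by auto
    have lk: "length (nz_idx \<eta>) = k" using spk[OF x(2)] .
    have ln: "length \<eta> = n" using spl[OF x(2)] .
    consider (c1) "p = 1" | (c2) "2 \<le> p" "p \<le> k - s + 1"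
      | (c3) "2 \<le> p" "\<not> p \<le> k - s + 1" "k - s + 2 \<le> p" "p \<le> k" | (c4) "k < p"
    proof -
      have "p = 1 \<or> (2 \<le> p \<and> p \<le> k - s + 1) \<or> (2 \<le> p \<and> \<not> p \<le> k - s + 1 \<and> k - s + 2 \<le> p \<and> p \<le> k) \<or> k < p"
        using x(3,4) by auto
      then show ?thesis using that by blast
    qed
    then show "x \<in> A \<union> B \<union> C"
    proof cases
      case c1
      then have "\<eta> = \<xi>" using x(5) Bcol_1 by simp
      then show ?thesis using x unfolding A_def by auto
    next
      case c2
      define m where "m = s + p - 1"
      have m: "m \<in> {1..k}" "m \<noteq> s" "s - 1 + p - 1 = m - 1" using c2 x(3) m_def by auto
      have e: "\<xi> = flip_sign \<eta> (nz_idx \<eta> ! (m - 1))" using x(5) Bcol_b1[OF lk c2] m(3) by simp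
      have nz: "nz_idx \<xi> = nz_idx \<eta>" using e nz_flip by simp
      have "\<eta> = fl m" unfolding fl_def nz using e flip_flip by metis
      then show ?thesis using x(1,3) m inB by auto
    next
      case c3
      define m where "m = s - 1 + p - k"
      have m: "m \<in> {1..k}" "m \<noteq> s" "s - 1 + p - k - 1 = m - 1" using c3 x(3) m_def by auto
      have e: "\<xi> = flip_sign \<eta> (nz_idx \<eta> ! (m - 1))" using x(5) Bcol_b2[OF lk c3] m(3) by simp
      have nz: "nz_idx \<xi> = nz_idx \<eta>" using e nz_flip by simp
      have "\<eta> = fl m" unfolding fl_def nz using e flip_flip by metis
      then show ?thesis using x(1,3) m inB by auto
    next
      case c4
      define i where "i = nz_idx \<eta> ! (s - 1)"
      define j where "j = z_idx \<eta> ! (p - k - 1)"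
      have e: "\<xi> = \<eta>[i := 0, j := \<eta> ! i]" using Bcol_c[OF lk _ _ c4] x(3,5) i_def j_def by simp
      have "i \<in> set (nz_idx \<eta>)" using i_def lk x(3) by auto
      then have iin: "i < n" "\<eta> ! i \<noteq> 0" using set_nz[of \<eta>] ln by auto
      have "p - k - 1 < length (z_idx \<eta>)" using len_z[of \<eta>] ln lk c4 x(4) by auto
      then have "j \<in> set (z_idx \<eta>)" using j_def by auto
      then have jin: "j < n" "\<eta> ! j = 0" using set_z[of \<eta>] ln by auto
      have ij: "i \<noteq> j" using iin jin by auto
      have xij: "\<xi> ! i = 0" "\<xi> ! j = \<eta> ! i" using e ij ln iin jin by (auto simp: nth_list_update)
      have xo: "\<xi> ! t = \<eta> ! t" if "t \<noteq> i" "t \<noteq> j" for t using e that by simp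
      have jN: "j \<in> NZ" "i \<in> Z" using jin iin xij NZ_def Z_def by auto
      have "\<eta> = sw j i"
      proof (rule nth_equalityI)
        show "length \<eta> = length (sw j i)" using ln swl by simp
        fix t assume "t < length \<eta>"
        then show "\<eta> ! t = sw j i ! t" using swn[of t j i] jN ln xij xo jin by auto
      qed
      then have "\<exists>j\<in>NZ. \<exists>i\<in>Z. \<eta> = sw j i \<and> s \<in> {1..k} \<and> nz_idx \<eta> ! (s - 1) = i"
      proof -
        have "\<eta> = sw j i \<and> s \<in> {1..k} \<and> nz_idx \<eta> ! (s - 1) = i" using \<open>\<eta> = sw j i\<close> x(3) i_def by simp
        then show ?thesis by (rule bexI[OF bexI[OF _ jN(2)] jN(1)])
      qed
      then have "x \<in> C" unfolding x(1) C_def by simp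
      then show ?thesis by (rule UnI2)
    qed
  qed
  have inSS: "(\<eta>, s) \<in> SS" if "\<eta> \<in> signed_perms \<zeta>" "s \<in> {1..k}" "p \<in> {1..n}" "Bcol \<eta> s p = \<xi>" for \<eta> s p
  proof -
    have "\<exists>p\<in>{1..n}. Bcol \<eta> s p = \<xi>" using that(3,4) by blast
    then show ?thesis unfolding SS_def using that(1,2) by simp
  qed
  have sub2: "A \<union> B \<union> C \<subseteq> SS"
  proof
    fix x assume "x \<in> A \<union> B \<union> C"
    then consider "x \<in> A" | "x \<in> B" | "x \<in> C" by blast
    then show "x \<in> SS"
    proof cases
      case 1
      then obtain s where s: "x = (\<xi>, s)" "s \<in> {1..k}" unfolding A_def by blast
      have "1 \<in> {1..n}" using assms(2) by simp
      then show ?thesis using inSS[OF xi s(2) _ Bcol_1] s(1) by blast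
    next
      case 2
      then obtain a where a: "a \<in> IB" "x = (\<lambda>(m, s). (fl m, s)) a" unfolding B_def by (rule imageE)
      obtain m s where "a = (m, s)" by (cases a)
      then have ms: "x = (fl m, s)" "m \<in> {1..k}" "s \<in> {1..k}" "m \<noteq> s"
        using a unfolding IB_def by auto
      define y where "y = nz_idx \<xi> ! (m - 1)"
      have lk: "length (nz_idx (fl m)) = k" using nzfl lnx by simp
      have fy: "flip_sign (fl m) y = \<xi>" unfolding fl_def y_def by (rule flip_flip)
      show ?thesis
      proof (cases "s < m")
        case True
        define p where "p = m - s + 1"
        have p: "2 \<le> p" "p \<le> k - s + 1" "s - 1 + p - 1 = m - 1" "p \<in> {1..n}" using True ms kn p_def by auto
        have "Bcol (fl m) s p = \<xi>" using Bcol_b1[OF lk p(1,2)] p(3) nzfl fy y_def by simp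
        then show ?thesis using inSS[OF flsp ms(3) p(4)] ms(1) by simp
      next
        case False
        then have ml: "m < s" using ms(4) by simp
        define p where "p = m + k + 1 - s"
        have p: "2 \<le> p" "\<not> p \<le> k - s + 1" "k - s + 2 \<le> p" "p \<le> k" "s - 1 + p - k - 1 = m - 1" "p \<in> {1..n}"
          using ml ms kn p_def by auto
        have "Bcol (fl m) s p = \<xi>" using Bcol_b2[OF lk p(1-4)] p(5) nzfl fy y_def by simp
        then show ?thesis using inSS[OF flsp ms(3) p(6)] ms(1) by simp
      qed
    next
      case 3
      then obtain j i s where jis: "x = (sw j i, s)" "j \<in> NZ" "i \<in> Z" "s \<in> {1..k}" "nz_idx (sw j i) ! (s - 1) = i"
        unfolding C_def by blast
      define \<eta> where "\<eta> = sw j i"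
      have esp: "\<eta> \<in> signed_perms \<zeta>" using swsp[OF jis(2,3)] \<eta>_def by simp
      have lk: "length (nz_idx \<eta>) = k" using spk[OF esp] .
      have ln: "length \<eta> = n" using spl[OF esp] .
      have jl: "j < n" "i < n" using jis(2,3) NZ_def Z_def by auto
      have "j \<in> set (z_idx \<eta>)" using set_z[of \<eta>] ln jl swj[OF jis(2,3)] \<eta>_def by simp
      then obtain q where q: "q < length (z_idx \<eta>)" "z_idx \<eta> ! q = j" by (auto simp: in_set_conv_nth)
      have lz: "length (z_idx \<eta>) = n - k" using len_z[of \<eta>] ln lk by simp
      define p where "p = k + 1 + q"
      have p: "k < p" "p - k - 1 = q" "p \<in> {1..n}" using q lz p_def by auto
      have ni: "nz_idx \<eta> ! (s - 1) = i" using jis(5) \<eta>_def by simp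
      have "Bcol \<eta> s p = \<eta>[i := 0, j := \<eta> ! i]"
        using Bcol_c[OF lk _ _ p(1)] jis(4) p(2) q(2) ni by simp
      also have "\<dots> = \<xi>"
      proof (rule nth_equalityI)
        show "length (\<eta>[i := 0, j := \<eta> ! i]) = length \<xi>" using ln lx by simp
        have ij: "i \<noteq> j" using jis(2,3) NZ_def Z_def by auto
        fix t assume "t < length (\<eta>[i := 0, j := \<eta> ! i])"
        then have t: "t < n" using ln by simp
        show "\<eta>[i := 0, j := \<eta> ! i] ! t = \<xi> ! t"
          using swn[OF t jis(2,3)] swn[OF jl(2) jis(2,3)] ij t ln jl jis(3) Z_def \<eta>_def
          by (cases "t = i"; cases "t = j") (auto simp: nth_list_update)
      qed
      finally show ?thesis using inSS[OF esp jis(4) p(3)] jis(1) \<eta>_def by simp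
    qed
  qed
  have cA: "card A = k" unfolding A_def by (simp add: card_cartesian_product)
  have flinj: "m = m'" if "m \<in> {1..k}" "m' \<in> {1..k}" "fl m = fl m'" for m m'
  proof -
    define x where "x = nz_idx \<xi> ! (m - 1)"
    define x' where "x' = nz_idx \<xi> ! (m' - 1)"
    have xx: "x = x'"
    proof (rule ccontr)
      assume ne: "x \<noteq> x'"
      have "fl m ! x = - (\<xi> ! x)" using nzx[OF that(1)] flip_nth1 lx fl_def x_def by auto
      moreover have "fl m' ! x = \<xi> ! x" using flip_nth2[OF ne] fl_def x'_def by simp
      ultimately show False using that(3) nzx[OF that(1)] x_def by auto
    qed
    have "m - 1 = m' - 1" using xx nth_eq_iff_index_eq[OF dist_nz, of "m - 1" \<xi> "m' - 1"] that lnx x_def x'_def by auto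
    then show ?thesis using that by auto
  qed
  have cB: "card B = k * (k - 1)"
  proof -
    have "inj_on (\<lambda>(m, s). (fl m, s)) IB"
    proof (rule inj_onI)
      fix a b assume a: "a \<in> IB" "b \<in> IB" "(\<lambda>(m, s). (fl m, s)) a = (\<lambda>(m, s). (fl m, s)) b"
      obtain m s where ma: "a = (m, s)" by (cases a)
      obtain m' s' where mb: "b = (m', s')" by (cases b)
      have "fl m = fl m'" "s = s'" "m \<in> {1..k}" "m' \<in> {1..k}" using a ma mb unfolding IB_def by auto
      then show "a = b" using flinj[of m m'] ma mb by simp
    qed
    then have "card B = card IB" unfolding B_def by (rule card_image)
    also have "card IB = (\<Sum>m\<in>{1..k}. card ({1..k} - {m}))" unfolding IB_def by (rule card_SigmaI) auto
    also have "\<dots> = (\<Sum>m\<in>{1..k}. k - 1)" by (intro sum.cong) auto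
    finally show ?thesis by simp
  qed
  have exs: "\<exists>!s. s \<in> {1..k} \<and> nz_idx (sw j i) ! (s - 1) = i" if ji: "j \<in> NZ" "i \<in> Z" for j i
  proof -
    have il: "i < n" using ji Z_def by auto
    have "sw j i ! i = \<xi> ! j" using swn[OF il ji] by simp
    then have "i \<in> set (nz_idx (sw j i))" using set_nz[of "sw j i"] swl il ji NZ_def by auto
    then obtain q where q: "q < length (nz_idx (sw j i))" "nz_idx (sw j i) ! q = i" by (auto simp: in_set_conv_nth)
    have lk: "length (nz_idx (sw j i)) = k" using spk[OF swsp[OF ji]] .
    show ?thesis
    proof (rule ex1I[of _ "q + 1"])
      show "q + 1 \<in> {1..k} \<and> nz_idx (sw j i) ! (q + 1 - 1) = i" using q lk by auto
    next
      fix s assume s: "s \<in> {1..k} \<and> nz_idx (sw j i) ! (s - 1) = i"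
      then have "s - 1 = q" using nth_eq_iff_index_eq[OF dist_nz, of "s - 1" "sw j i" q] q lk by auto
      then show "s = q + 1" using s by auto
    qed
  qed
  have swinj: "j = j' \<and> i = i'" if "j \<in> NZ" "i \<in> Z" "j' \<in> NZ" "i' \<in> Z" "sw j i = sw j' i'" for j i j' i'
  proof -
    have jl: "j < n" "i < n" using that NZ_def Z_def by auto
    have "j \<noteq> i'" using that NZ_def Z_def by auto
    have jj: "j = j'"
    proof (rule ccontr)
      assume "j \<noteq> j'"
      then have "sw j' i' ! j = \<xi> ! j" using swn[OF jl(1) that(3,4)] \<open>j \<noteq> i'\<close> by simp
      then show False using swj[OF that(1,2)] that(1,5) NZ_def by auto
    qed
    have "i = i'"
    proof (rule ccontr)
      assume "i \<noteq> i'"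
      moreover have "i \<noteq> j" using that NZ_def Z_def by auto
      ultimately have "sw j i' ! i = \<xi> ! i" using swn[OF jl(2) that(1,4)] by simp
      moreover have "sw j i ! i = \<xi> ! j" using swn[OF jl(2) that(1,2)] by simp
      ultimately show False using that jj NZ_def Z_def by auto
    qed
    then show ?thesis using jj by simp
  qed
  define h where "h = (\<lambda>(j, i). (sw j i, THE s. s \<in> {1..k} \<and> nz_idx (sw j i) ! (s - 1) = i))"
  have Ceq: "C = h ` (NZ \<times> Z)"
  proof (rule set_eqI, rule iffI)
    fix x assume "x \<in> C"
    then obtain j i s where jis: "j \<in> NZ" "i \<in> Z" "x = (sw j i, s)" "s \<in> {1..k}" "nz_idx (sw j i) ! (s - 1) = i"
      unfolding C_def by blast
    have "(THE s. s \<in> {1..k} \<and> nz_idx (sw j i) ! (s - 1) = i) = s"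
      using the1_equality[OF exs[OF jis(1,2)]] jis(4,5) by blast
    then have "h (j, i) = x" using jis(3) h_def by simp
    then show "x \<in> h ` (NZ \<times> Z)" using jis(1,2) by (metis SigmaI image_eqI)
  next
    fix x assume "x \<in> h ` (NZ \<times> Z)"
    then obtain j i where jis: "j \<in> NZ" "i \<in> Z" "x = h (j, i)" by blast
    define t where "t = (THE s. s \<in> {1..k} \<and> nz_idx (sw j i) ! (s - 1) = i)"
    have t: "t \<in> {1..k} \<and> nz_idx (sw j i) ! (t - 1) = i"
      unfolding t_def using theI'[OF exs[OF jis(1,2)]] .
    have xe: "x = (sw j i, t)" using jis(3) unfolding h_def t_def by simp
    show "x \<in> C" unfolding C_def xe using jis(1,2) t by blast
  qed
  have hinj: "inj_on h (NZ \<times> Z)"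
  proof (rule inj_onI)
    fix a b assume a: "a \<in> NZ \<times> Z" "b \<in> NZ \<times> Z" "h a = h b"
    obtain j i where ma: "a = (j, i)" by (cases a)
    obtain j' i' where mb: "b = (j', i')" by (cases b)
    have "sw j i = sw j' i'" using a(3) ma mb h_def by simp
    then show "a = b" using swinj[of j i j' i'] a(1,2) ma mb by auto
  qed
  have cC: "card C = k * (n - k)"
    using card_image[OF hinj] Ceq cNZ cZ by (simp add: card_cartesian_product)
  have fin: "finite A" "finite B" "finite C"
    unfolding A_def B_def IB_def Ceq NZ_def Z_def by auto
  have flne: "fl m ! (nz_idx \<xi> ! (m - 1)) \<noteq> \<xi> ! (nz_idx \<xi> ! (m - 1))" if "m \<in> {1..k}" for m
    using nzx[OF that] flip_nth1[of "nz_idx \<xi> ! (m - 1)" \<xi>] lx fl_def by auto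
  have flj: "fl m ! j \<noteq> 0" if "m \<in> {1..k}" "j \<in> NZ" for m j
    using nzx[OF that(1)] flip_nth1[of "nz_idx \<xi> ! (m - 1)" \<xi>] flip_nth2[of j "nz_idx \<xi> ! (m - 1)" \<xi>] lx fl_def that(2) NZ_def
    by (cases "j = nz_idx \<xi> ! (m - 1)") auto
  have dis: "A \<inter> B = {}" "(A \<union> B) \<inter> C = {}"
  proof -
    show "A \<inter> B = {}"
    proof (rule ccontr)
      assume "A \<inter> B \<noteq> {}"
      then obtain x where x: "x \<in> A" "x \<in> B" by blast
      then obtain m s where ms: "(m, s) \<in> IB" "x = (fl m, s)" unfolding B_def by auto
      then have "fl m = \<xi>" "m \<in> {1..k}" using x(1) unfolding A_def IB_def by auto
      then show False using flne by metis
    qed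
    show "(A \<union> B) \<inter> C = {}"
    proof (rule ccontr)
      assume "(A \<union> B) \<inter> C \<noteq> {}"
      then obtain x where x: "x \<in> A \<union> B" "x \<in> C" by blast
      then obtain j i s where jis: "j \<in> NZ" "i \<in> Z" "x = (sw j i, s)" unfolding C_def by blast
      show False using x(1)
      proof
        assume "x \<in> A" then have "sw j i = \<xi>" using jis unfolding A_def by auto
        then show False using swj[OF jis(1,2)] jis(1) NZ_def by auto
      next
        assume "x \<in> B"
        then obtain m s' where ms: "(m, s') \<in> IB" "x = (fl m, s')" unfolding B_def by auto
        then have "fl m = sw j i" "m \<in> {1..k}" using jis unfolding IB_def by auto
        then show False using flj[OF _ jis(1)] swj[OF jis(1,2)] by metis
      qed
    qed
  qed
  have "card SS = k + k * (k - 1) + k * (n - k)"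
    using sub1 sub2 cA cB cC fin dis by (simp add: card_Un_disjoint)
  also have "\<dots> = n * k"
  proof -
    have "(k - 1) + (n - k) + 1 = n" using kn assms(6) by arith
    then have "k * ((k - 1) + (n - k) + 1) = k * n" by simp
    then show ?thesis by (simp add: algebra_simps)
  qed
  finally show ?thesis unfolding SS_def .
qed

end
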